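(* Let $A$ be a finite multiset of $n$ points in $\mathbb{R}^d$ with mean $\mu$, let $\varepsilon,\delta\in(0,1)$, $b>0$, $k=b\log\delta^{-1}$ and $r=\frac{1}{11}\sqrt{\frac{\varepsilon\,\mathrm{Opt}}{n}}$. Let $P=\{\hat\mu_1,\dots,\hat\mu_k\}\subset\mathbb{R}^d$ be points such that at least $\frac{7}{10}b\log\delta^{-1}$ indices $i$ satisfy $\|\hat\mu_i-\mu\|\le r$. If, at iteration $j$, Algorithm $\textsc{FastGD}(P)$ has a point $c_j$ with $\|c_j-\mu\|\le10r$, then $\|c_{j+1}-\mu\|\le11r$.
   Context: $\mu=\frac1n\sum_{p\in A}p$, $\mathrm{Opt}=\sum_{p\in A}\|p-\mu\|^2$. For $q\in\mathbb{R}^d$, $\nabla(q)=\sum_{i:\hat\mu_i\neq q}\frac{q-\hat\mu_i}{\|q-\hat\mu_i\|}$. Algorithm $\textsc{FastGD}(P)$: $c_0$ is the coordinate-wise median of $P$; for $j\ge1$, given $c_{j-1}$ compute $g=\nabla(c_{j-1})$, orthogonally project all points of $P$ onto the line $\{c_{j-1}-tg:t\in\mathbb{R}\}$, and let $c_j$ be a median of the projected points along this line. *)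

theory Defs
  imports "HOL-Analysis.Analysis" "HOL-Library.Multiset"
begin

definition mset_mean :: "('a::real_vector) multiset \<Rightarrow> 'a" where
  "mset_mean A = (1 / real (size A)) *\<^sub>R sum_mset A"

definition mset_opt :: "('a::real_normed_vector) multiset \<Rightarrow> real" where
  "mset_opt A = sum_mset (image_mset (\<lambda>p. (norm (p - mset_mean A))\<^sup>2) A)"

definition is_median :: "real list \<Rightarrow> real \<Rightarrow> bool" where
  "is_median xs m \<longleftrightarrow>
     length xs \<le> 2 * card {i. i < length xs \<and> xs ! i \<le> m} \<and>
     length xs \<le> 2 * card {i. i < length xs \<and> xs ! i \<ge> m}"

definition grad :: "('a::real_normed_vector) list \<Rightarrow> 'a \<Rightarrow> 'a" where
  "grad P q = (\<Sum>i\<in>{i. i < length P \<and> P ! i \<noteq> q}. (1 / norm (q - P ! i)) *\<^sub>R (q - P ! i))"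

definition coord_median :: "(real ^ 'd) list \<Rightarrow> real ^ 'd \<Rightarrow> bool" where
  "coord_median P c \<longleftrightarrow> (\<forall>i. is_median (map (\<lambda>p. p $ i) P) (c $ i))"

text \<open>One FastGD step: with g = grad P c, project every point of P onto the line
  {c - t g}; point p projects to c - t_p g with t_p = ((c - p) \<bullet> g) / \<parallel>g\<parallel>^2;
  the new point is c - t g for a median t of the projected parameters.
  (If g = 0 the line degenerates to {c}; then all t_p = 0 and the new point is c.)\<close>
definition fastgd_step :: "('a::real_inner) list \<Rightarrow> 'a \<Rightarrow> 'a \<Rightarrow> bool" where
  "fastgd_step P c c' \<longleftrightarrow>
     (let g = grad P c in
      \<exists>t. is_median (map (\<lambda>p. ((c - p) \<bullet> g) / (norm g)\<^sup>2) P) t \<and> c' = c - t *\<^sub>R g)"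

definition fastgd_run :: "(real ^ 'd) list \<Rightarrow> (nat \<Rightarrow> real ^ 'd) \<Rightarrow> bool" where
  "fastgd_run P c \<longleftrightarrow> coord_median P (c 0) \<and> (\<forall>j. fastgd_step P (c j) (c (Suc j)))"

end

theory Submission
  imports Defs
begin

lemma A1: fixes v g :: "'a::real_inner"
  shows "(norm (v - s *\<^sub>R g))\<^sup>2 = v \<bullet> v - 2 * s * (v \<bullet> g) + s * s * (g \<bullet> g)"
proof -
  have "(norm (v - s *\<^sub>R g))\<^sup>2 = (v - s *\<^sub>R g) \<bullet> (v - s *\<^sub>R g)" by (rule power2_norm_eq_inner)
  also have "\<dots> = v \<bullet> v - s * (v \<bullet> g) - s * (g \<bullet> v) + s * s * (g \<bullet> g)"
    by (simp add: inner_diff_left inner_diff_right algebra_simps)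
  also have "g \<bullet> v = v \<bullet> g" by (rule inner_commute)
  finally show ?thesis by simp
qed

lemma A2: fixes a n w :: real assumes "n > 0"
  shows "w - 2 * (a / n) * a + (a / n) * (a / n) * n = w - a * a / n"
proof -
  have "(a / n) * (a / n) * n = a * a / n" using assms by (simp add: power2_eq_square)
  moreover have "2 * (a / n) * a = 2 * (a * a / n)" by simp
  ultimately show ?thesis by simp
qed

lemma proj_le:
  fixes v g :: "'a::real_inner"
  shows "norm (v - ((v \<bullet> g) / (norm g)\<^sup>2) *\<^sub>R g) \<le> norm v"
proof (cases "g = 0")
  case True then show ?thesis by simp
next
  case False
  define s where "s = (v \<bullet> g) / (norm g)\<^sup>2"
  have ng: "(norm g)\<^sup>2 > 0" using False by simp
  have gg: "g \<bullet> g = (norm g)\<^sup>2" by (rule power2_norm_eq_inner[symmetric])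
  have "(norm (v - s *\<^sub>R g))\<^sup>2 = v \<bullet> v - 2 * s * (v \<bullet> g) + s * s * (g \<bullet> g)"
    by (rule A1)
  also have "\<dots> = v \<bullet> v - (v \<bullet> g) * (v \<bullet> g) / (norm g)\<^sup>2"
    unfolding s_def gg by (rule A2[OF ng])
  also have "\<dots> \<le> v \<bullet> v" using ng by simp
  also have "\<dots> = (norm v)\<^sup>2" by (rule power2_norm_eq_inner[symmetric])
  finally have "(norm (v - s *\<^sub>R g))\<^sup>2 \<le> (norm v)\<^sup>2" .
  then show ?thesis unfolding s_def by (rule power2_le_imp_le) simp
qed

lemma key:
  fixes P :: "'a::real_inner list" and mu c c' :: 'a and r :: real
  assumes st: "fastgd_step P c c'" and cl: "norm (c - mu) \<le> 10 * r"
    and gd: "2 * card {i. i < length P \<and> norm (P ! i - mu) \<le> r} > length P"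
  shows "norm (c' - mu) \<le> 11 * r"
proof -
  define g where "g = grad P c"
  obtain t where med: "is_median (map (\<lambda>p. ((c - p) \<bullet> g) / (norm g)\<^sup>2) P) t"
    and c': "c' = c - t *\<^sub>R g"
    using st unfolding fastgd_step_def g_def Let_def by blast
  have r0: "r \<ge> 0" using cl norm_ge_zero[of "c - mu"] by linarith
  show ?thesis
  proof (cases "g = 0")
    case True then show ?thesis using c' cl r0 by simp
  next
    case False
    define k where "k = length P"
    define G where "G = {i. i < k \<and> norm (P ! i - mu) \<le> r}"
    define xs where "xs = map (\<lambda>p. ((c - p) \<bullet> g) / (norm g)\<^sup>2) P"
    define s where "s = ((c - mu) \<bullet> g) / (norm g)\<^sup>2"
    have ng: "norm g > 0" using False by simp
    have lxs: "length xs = k" unfolding xs_def k_def by simp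
    have good: "\<bar>xs ! i - s\<bar> \<le> r / norm g" if "i \<in> G" for i
    proof -
      have i: "i < k" "norm (P ! i - mu) \<le> r" using that unfolding G_def by auto
      have "xs ! i - s = ((mu - P ! i) \<bullet> g) / (norm g)\<^sup>2"
        using i unfolding xs_def s_def k_def by (simp add: diff_divide_distrib[symmetric] inner_diff_left)
      also have "\<bar>\<dots>\<bar> \<le> norm (mu - P ! i) * norm g / (norm g)\<^sup>2"
        using ng by (simp add: abs_div Cauchy_Schwarz_ineq2 divide_right_mono)
      also have "\<dots> = norm (P ! i - mu) / norm g" using ng by (simp add: norm_minus_commute power2_eq_square)
      also have "\<dots> \<le> r / norm g" using i ng by (simp add: divide_right_mono)
      finally show ?thesis .
    qed
    have fin: "finite {i. i < k}" by simp
    have sub: "G \<subseteq> {i. i < k}" unfolding G_def by auto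
    have fG: "finite G" using sub finite_subset fin by blast
    have cardG: "card G + card ({i. i < k} - G) = k"
      using card_Diff_subset[OF fG sub] card_mono[OF fin sub] by simp
    have gd': "2 * card G > k" using gd unfolding G_def k_def by simp
    have up: "t \<le> s + r / norm g"
    proof (rule ccontr)
      assume "\<not> ?thesis"
      then have lt: "s + r / norm g < t" by simp
      have "{i. i < length xs \<and> xs ! i \<ge> t} \<subseteq> {i. i < k} - G"
      proof
        fix i assume "i \<in> {i. i < length xs \<and> xs ! i \<ge> t}"
        then have i: "i < k" "xs ! i \<ge> t" using lxs by auto
        have "i \<notin> G"
        proof
          assume "i \<in> G"
          then have "\<bar>xs ! i - s\<bar> \<le> r / norm g" by (rule good)
          then show False using i(2) lt by linarith
        qed
        then show "i \<in> {i. i < k} - G" using i(1) by simp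
      qed
      then have "card {i. i < length xs \<and> xs ! i \<ge> t} \<le> card ({i. i < k} - G)"
        by (intro card_mono) auto
      moreover have "length xs \<le> 2 * card {i. i < length xs \<and> xs ! i \<ge> t}"
        using med unfolding is_median_def xs_def by simp
      ultimately show False using cardG gd' lxs by linarith
    qed
    have lo: "t \<ge> s - r / norm g"
    proof (rule ccontr)
      assume "\<not> ?thesis"
      then have lt: "t < s - r / norm g" by simp
      have "{i. i < length xs \<and> xs ! i \<le> t} \<subseteq> {i. i < k} - G"
      proof
        fix i assume "i \<in> {i. i < length xs \<and> xs ! i \<le> t}"
        then have i: "i < k" "xs ! i \<le> t" using lxs by auto
        have "i \<notin> G"
        proof
          assume "i \<in> G"
          then have "\<bar>xs ! i - s\<bar> \<le> r / norm g" by (rule good)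
          then show False using i(2) lt by linarith
        qed
        then show "i \<in> {i. i < k} - G" using i(1) by simp
      qed
      then have "card {i. i < length xs \<and> xs ! i \<le> t} \<le> card ({i. i < k} - G)"
        by (intro card_mono) auto
      moreover have "length xs \<le> 2 * card {i. i < length xs \<and> xs ! i \<le> t}"
        using med unfolding is_median_def xs_def by simp
      ultimately show False using cardG gd' lxs by linarith
    qed
    have ts: "\<bar>s - t\<bar> * norm g \<le> r"
    proof -
      have "\<bar>s - t\<bar> \<le> r / norm g" using up lo by linarith
      then show ?thesis using ng by (simp add: pos_le_divide_eq)
    qed
    have "c' - mu = ((c - mu) - s *\<^sub>R g) + (s - t) *\<^sub>R g"
      using c' by (simp add: algebra_simps)
    then have "norm (c' - mu) \<le> norm ((c - mu) - s *\<^sub>R g) + norm ((s - t) *\<^sub>R g)"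
      using norm_triangle_ineq by metis
    moreover have "norm ((s - t) *\<^sub>R g) = \<bar>s - t\<bar> * norm g" by simp
    moreover have "norm ((c - mu) - s *\<^sub>R g) \<le> norm (c - mu)" using proj_le[of "c - mu" g] unfolding s_def .
    ultimately show ?thesis using cl ts by linarith
  qed
qed

theorem lemma3p4:
  fixes A :: "(real ^ 'd) multiset"
    and P :: "(real ^ 'd) list"
    and c :: "nat \<Rightarrow> real ^ 'd"
    and \<epsilon> \<delta> b r :: real
    and j :: nat
  assumes "A \<noteq> {#}"
    and "0 < \<epsilon>" "\<epsilon> < 1" "0 < \<delta>" "\<delta> < 1" "0 < b"
    and "real (length P) = b * ln (1 / \<delta>)"
    and "r = (1 / 11) * sqrt (\<epsilon> * mset_opt A / real (size A))"
    and "real (card {i. i < length P \<and> norm (P ! i - mset_mean A) \<le> r})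
           \<ge> (7 / 10) * b * ln (1 / \<delta>)"
    and "fastgd_run P c"
    and "norm (c j - mset_mean A) \<le> 10 * r"
  shows "norm (c (Suc j) - mset_mean A) \<le> 11 * r"
proof (rule key)
  show "fastgd_step P (c j) (c (Suc j))" using assms(10) unfolding fastgd_run_def by blast
  show "norm (c j - mset_mean A) \<le> 10 * r" by fact
  have "ln (1 / \<delta>) > 0" using assms(4,5) by simp
  then have k: "real (length P) > 0" using assms(6,7) by simp
  then show "2 * card {i. i < length P \<and> norm (P ! i - mset_mean A) \<le> r} > length P"
    using assms(7,9) by linarith
qed

end
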